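(* Let $q\in(0,1)$, $k\ge1$, and let $R:\mathbb{R}^k\to\mathbb{R}$ be a convex differentiable regularizer such that all the minimizers below exist. Run FTRL as follows for $t=1,\dots,T$: receive $g_t\in[0,1]^k$; set $\theta_t\in\arg\min_{\theta\in\mathbb{R}^k}\sum_{s=1}^{t-1}\ell_s(\theta)+R(\theta)$; predict $\hat\tau_t=\langle\theta_t,g_t\rangle$; receive $\tau_t\in[0,1]$; define the linear loss $\ell_t(\theta)=\langle\theta,g_t\rangle\,(\mathbf{1}[\tau_t\le\hat\tau_t]-q)$ (the linearization of $\theta\mapsto p_q(\langle\theta,g_t\rangle,\tau_t)$ at $\theta_t$). Let $\theta_{T+1}\in\arg\min_\theta\sum_{s=1}^{T}\ell_s(\theta)+R(\theta)$. Then for every $i\in[k]$ with $T_i>0$, $$\left|\mathrm{Cov}(\Pi_T,G_i)-q\right|\le\frac{\|\nabla R(\theta_{T+1})\|_\infty}{T_i}.$$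
   Context: For $q\in(0,1)$ the pinball loss is $p_q(\hat\tau,\tau)=q(\tau-\hat\tau)$ if $\tau\ge\hat\tau$ and $p_q(\hat\tau,\tau)=(q-1)(\tau-\hat\tau)$ if $\tau<\hat\tau$. There are $k$ prediction-independent groups $G_1,\dots,G_k$ (functions of the history and context, with values in $[0,1]$, not depending on the current prediction), and $g_t=(g_{t,1},\dots,g_{t,k})$ with $g_{t,i}=G_i$ evaluated at round $t$; the sequences $g_t,\tau_t$ may be chosen adversarially. The group size is $T_i=\sum_{t=1}^T g_{t,i}$ and the group conditional coverage is $\mathrm{Cov}(\Pi_T,G_i)=\frac{1}{T_i}\sum_{t=1}^T\mathbf{1}[\hat\tau_t\ge\tau_t]\,g_{t,i}$. *)

theory Defs
  imports "HOL-Analysis.Analysis"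
begin

definition pinball :: "real \<Rightarrow> real \<Rightarrow> real \<Rightarrow> real" where
  "pinball q tauhat tau = (if tau \<ge> tauhat then q * (tau - tauhat) else (q - 1) * (tau - tauhat))"

definition pred :: "(nat \<Rightarrow> real^'k) \<Rightarrow> (nat \<Rightarrow> real^'k) \<Rightarrow> nat \<Rightarrow> real" where
  "pred theta g t = theta t \<bullet> g t"

definition lin_loss :: "real \<Rightarrow> (nat \<Rightarrow> real^'k) \<Rightarrow> (nat \<Rightarrow> real^'k) \<Rightarrow> (nat \<Rightarrow> real)
    \<Rightarrow> nat \<Rightarrow> real^'k \<Rightarrow> real" where
  "lin_loss q theta g tau t th =
     (th \<bullet> g t) * ((if tau t \<le> pred theta g t then 1 else 0) - q)"

definition grad :: "(real^'k \<Rightarrow> real) \<Rightarrow> real^'k \<Rightarrow> real^'k" where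
  "grad R x = (\<chi> i. frechet_derivative R (at x) (axis i 1))"

definition group_size :: "(nat \<Rightarrow> real^'k) \<Rightarrow> nat \<Rightarrow> 'k \<Rightarrow> real" where
  "group_size g T i = (\<Sum>t\<in>{1..T}. g t $ i)"

definition coverage :: "(nat \<Rightarrow> real^'k) \<Rightarrow> (nat \<Rightarrow> real^'k) \<Rightarrow> (nat \<Rightarrow> real) \<Rightarrow> nat \<Rightarrow> 'k \<Rightarrow> real" where
  "coverage theta g tau T i =
     (1 / group_size g T i) * (\<Sum>t\<in>{1..T}. (if pred theta g t \<ge> tau t then 1 else 0) * g t $ i)"

end

theory Submission
  imports Defs
begin

lemma fermat_axis:
  fixes R :: "real^'k \<Rightarrow> real" and c :: "real^'k" and x0 :: "real^'k"
  assumes diff: "R differentiable (at x0)"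
    and minim: "\<And>th. c \<bullet> x0 + R x0 \<le> c \<bullet> th + R th"
  shows "c $ i + frechet_derivative R (at x0) (axis i 1) = 0"
proof -
  let ?D = "frechet_derivative R (at x0)"
  let ?e = "axis i (1::real) :: real^'k"
  have RD: "(R has_derivative ?D) (at x0)" using diff frechet_derivative_works by blast
  have bl: "bounded_linear ?D" using RD has_derivative_bounded_linear by blast
  have lin: "((\<lambda>h::real. x0 + h *\<^sub>R ?e) has_derivative (\<lambda>h. h *\<^sub>R ?e)) (at 0)"
    by (auto intro!: derivative_eq_intros)
  have comp: "((\<lambda>h. R (x0 + h *\<^sub>R ?e)) has_derivative (\<lambda>h. ?D (h *\<^sub>R ?e))) (at 0)"
    using has_derivative_compose[OF lin] RD by (simp add: o_def)
  have eq: "(\<lambda>h. ?D (h *\<^sub>R ?e)) = (\<lambda>h. ?D ?e * h)"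
    using linear_scale[OF bounded_linear.linear[OF bl]] by (auto simp: mult.commute)
  have "((\<lambda>h. R (x0 + h *\<^sub>R ?e)) has_real_derivative ?D ?e) (at 0)"
    using comp unfolding eq has_field_derivative_def by simp
  then have d2: "((\<lambda>h. c \<bullet> x0 + h * c $ i + R (x0 + h *\<^sub>R ?e)) has_real_derivative (c $ i + ?D ?e)) (at 0)"
    by (auto intro!: derivative_eq_intros)
  have "\<forall>y. \<bar>0 - y\<bar> < 1 \<longrightarrow> (\<lambda>h. c \<bullet> x0 + h * c $ i + R (x0 + h *\<^sub>R ?e)) 0
          \<le> (\<lambda>h. c \<bullet> x0 + h * c $ i + R (x0 + h *\<^sub>R ?e)) y"
  proof (intro allI impI)
    fix y :: real
    have "c \<bullet> (x0 + y *\<^sub>R ?e) = c \<bullet> x0 + y * c $ i"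
      by (simp add: inner_add_right inner_axis)
    then show "(\<lambda>h. c \<bullet> x0 + h * c $ i + R (x0 + h *\<^sub>R ?e)) 0
          \<le> (\<lambda>h. c \<bullet> x0 + h * c $ i + R (x0 + h *\<^sub>R ?e)) y"
      using minim[of "x0 + y *\<^sub>R ?e"] by simp
  qed
  from DERIV_local_min[OF d2 zero_less_one this] show ?thesis .
qed

theorem theorem8:
  fixes q :: real and R :: "real^'k \<Rightarrow> real"
    and g theta :: "nat \<Rightarrow> real^'k" and tau :: "nat \<Rightarrow> real" and T :: nat
  assumes q: "0 < q" "q < 1"
    and R_convex: "convex_on UNIV R"
    and R_diff: "\<And>x. R differentiable (at x)"
    and g_range: "\<And>t j. t \<in> {1..T} \<Longrightarrow> 0 \<le> g t $ j \<and> g t $ j \<le> 1"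
    and tau_range: "\<And>t. t \<in> {1..T} \<Longrightarrow> 0 \<le> tau t \<and> tau t \<le> 1"
    and ftrl: "\<And>t th. t \<in> {1..T+1} \<Longrightarrow>
        (\<Sum>s\<in>{1..<t}. lin_loss q theta g tau s (theta t)) + R (theta t)
          \<le> (\<Sum>s\<in>{1..<t}. lin_loss q theta g tau s th) + R th"
  shows "\<forall>i. group_size g T i > 0 \<longrightarrow>
           \<bar>coverage theta g tau T i - q\<bar> \<le> infnorm (grad R (theta (T+1))) / group_size g T i"
proof (intro allI impI)
  fix i assume pos: "group_size g T i > 0"
  define ind where "ind s = (if tau s \<le> pred theta g s then 1 else 0::real)" for s
  define c where "c = (\<Sum>s\<in>{1..T}. (ind s - q) *\<^sub>R g s)"
  have ll: "(\<Sum>s\<in>{1..<T+1}. lin_loss q theta g tau s th) = c \<bullet> th" for th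
    unfolding c_def lin_loss_def ind_def
    by (simp add: atLeastLessThanSuc_atLeastAtMost inner_sum_right inner_commute mult.commute)
  have "c $ i + frechet_derivative R (at (theta (T+1))) (axis i 1) = 0"
    apply (rule fermat_axis[OF R_diff])
    using ftrl[of "T+1"] unfolding ll by simp
  then have ci: "c $ i = - grad R (theta (T+1)) $ i" by (simp add: grad_def)
  define S where "S = (\<Sum>t\<in>{1..T}. (if pred theta g t \<ge> tau t then 1 else 0) * g t $ i)"
  have cS: "c $ i = S - q * group_size g T i"
  proof -
    have "c $ i = (\<Sum>s\<in>{1..T}. (ind s - q) * g s $ i)"
      unfolding c_def by (simp add: sum_component)
    also have "\<dots> = (\<Sum>s\<in>{1..T}. ind s * g s $ i - q * g s $ i)"
      by (rule sum.cong) (auto simp: left_diff_distrib)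
    also have "\<dots> = (\<Sum>s\<in>{1..T}. ind s * g s $ i) - q * group_size g T i"
      unfolding group_size_def by (simp only: sum_subtractf sum_distrib_left)
    also have "(\<Sum>s\<in>{1..T}. ind s * g s $ i) = S"
      unfolding S_def ind_def by (rule sum.cong) auto
    finally show ?thesis .
  qed
  have cov: "coverage theta g tau T i - q = c $ i / group_size g T i"
  proof -
    have "coverage theta g tau T i = S / group_size g T i"
      unfolding coverage_def S_def by simp
    then show ?thesis using pos unfolding cS by (simp add: diff_divide_distrib)
  qed
  show "\<bar>coverage theta g tau T i - q\<bar> \<le> infnorm (grad R (theta (T+1))) / group_size g T i"
  proof -
    have "\<bar>coverage theta g tau T i - q\<bar> = \<bar>grad R (theta (T+1)) $ i\<bar> / group_size g T i"
      unfolding cov ci abs_divide abs_minus_cancel using pos by simp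
    also have "\<dots> \<le> infnorm (grad R (theta (T+1))) / group_size g T i"
      by (rule divide_right_mono[OF component_le_infnorm_cart]) (use pos in simp)
    finally show ?thesis .
  qed
qed

end
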